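(* For $n=0,1,2,\dots$ let $H_n$ denote the $n$-th (physicists') Hermite polynomial and define $h_n(x)=e^{-x^2}\left[H_{n+1}^2(x)-H_n(x)H_{n+2}(x)\right]$ for $x\in\mathbb{R}$. Then $h_n$ is positive on $\mathbb{R}$ and satisfies, for all $x\in\mathbb{R}$, \[ h_n(x)\le\begin{cases}\dfrac{4^{n+1}}{2\pi}\,\dfrac{2n+3}{n+1}\,\Gamma^2\!\left(\frac n2+1\right), & n\text{ odd},\\[3ex] \dfrac{4^{n+1}}{2\pi}\,(n+1)\,\Gamma^2\!\left(\frac{n+1}{2}\right), & n\text{ even}.\end{cases} \]
   Context: The physicists' Hermite polynomials are defined by $H_0(x)=1$, $H_1(x)=2x$, $H_{n+1}(x)=2xH_n(x)-2nH_{n-1}(x)$; equivalently $H_n(x)=(-1)^ne^{x^2}\frac{d^n}{dx^n}e^{-x^2}$. $\Gamma$ denotes the Gamma function. *)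

theory Defs
  imports "HOL-Analysis.Analysis"
begin

fun hermite :: "nat \<Rightarrow> real \<Rightarrow> real" where
  "hermite 0 x = 1"
| "hermite (Suc 0) x = 2 * x"
| "hermite (Suc (Suc n)) x = 2 * x * hermite (Suc n) x - 2 * real (Suc n) * hermite n x"

definition turan_h :: "nat \<Rightarrow> real \<Rightarrow> real" where
  "turan_h n x = exp (- (x^2)) * ((hermite (Suc n) x)^2 - hermite n x * hermite (Suc (Suc n)) x)"

end

theory Submission
  imports Defs
begin

lemma hermite_deriv:
  "(hermite n has_real_derivative (2*x*hermite n x - hermite (Suc n) x)) (at x)"
proof (induction n x rule: hermite.induct)
  case (1 x)
  have e: "hermite 0 = (\<lambda>_. 1)" by (rule ext) simp
  show ?case unfolding e by (auto intro!: derivative_eq_intros)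
next
  case (2 x)
  have e: "hermite (Suc 0) = (\<lambda>x. 2*x)" by (rule ext) simp
  show ?case unfolding e by (auto intro!: derivative_eq_intros simp: algebra_simps)
next
  case (3 n x)
  have e: "hermite (Suc (Suc n)) = (\<lambda>x. 2 * x * hermite (Suc n) x - 2 * real (Suc n) * hermite n x)"
    by (rule ext) simp
  show ?case unfolding e
    apply (rule derivative_eq_intros refl 3(1) 3(2))+
    apply (simp add: algebra_simps)
    done
qed

lemma delta_pos: "hermite (Suc n) x ^ 2 - hermite n x * hermite (Suc (Suc n)) x > 0"
proof (induction n)
  case 0 then show ?case by (simp add: algebra_simps power2_eq_square)
next
  case (Suc n)
  have "hermite (Suc (Suc n)) x ^ 2 - hermite (Suc n) x * hermite (Suc (Suc (Suc n))) x
     = 2*real (Suc n) * (hermite (Suc n) x ^ 2 - hermite n x * hermite (Suc (Suc n)) x)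
       + 2 * hermite (Suc n) x ^ 2"
    by (simp only: hermite.simps) (simp add: algebra_simps power2_eq_square)
  moreover have "2 * hermite (Suc n) x ^ 2 \<ge> 0" by simp
  moreover have "2*real (Suc n) * (hermite (Suc n) x ^ 2 - hermite n x * hermite (Suc (Suc n)) x) > 0"
    using Suc by simp
  ultimately show ?case by linarith
qed

lemma hermite_zero:
  "hermite (2*m) 0 = (-1)^m * fact (2*m) / fact m \<and> hermite (Suc (2*m)) 0 = 0"
proof (induction m)
  case 0 then show ?case by simp
next
  case (Suc m)
  have e1: "2 * Suc m = Suc (Suc (2*m))" by simp
  have e2: "Suc (2 * Suc m) = Suc (Suc (Suc (2*m)))" by simp
  have f1: "fact (Suc (Suc (2*m))) = (real (2*m) + 2) * (real (2*m)+1) * (fact (2*m) :: real)"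
    by (simp add: algebra_simps)
  have f2: "fact (Suc m) = (real m + 1) * (fact m :: real)" by (simp add: algebra_simps)
  have "hermite (2 * Suc m) 0 = - 2 * real (Suc (2*m)) * ((-1)^m * fact (2*m) / fact m)"
    unfolding e1 using Suc by (simp del: of_nat_Suc)
  also have "\<dots> = (-1)^Suc m * fact (2*Suc m) / fact (Suc m)"
    unfolding e1 f1 f2 using Suc by (simp add: divide_simps) (simp add: algebra_simps)
  finally have z1: "hermite (2 * Suc m) 0 = (-1)^Suc m * fact (2*Suc m) / fact (Suc m)" .
  have z2: "hermite (Suc (2 * Suc m)) 0 = 0" unfolding e2 using Suc by simp
  from z1 z2 show ?case by blast
qed

lemma Gamma_half_nat:
  "Gamma (real m + 1/2) = fact (2*m) * sqrt pi / (4^m * fact m)"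
proof (induction m)
  case 0 then show ?case by (simp add: Gamma_one_half_real)
next
  case (Suc m)
  have nz: "real m + 1/2 \<notin> \<int>\<^sub>\<le>\<^sub>0"
  proof
    assume "real m + 1/2 \<in> \<int>\<^sub>\<le>\<^sub>0"
    then have "real m + 1/2 \<le> 0" by (rule nonpos_Ints_nonpos)
    then show False by simp
  qed
  have e1: "2 * Suc m = Suc (Suc (2*m))" by simp
  have f1: "fact (Suc (Suc (2*m))) = (real (2*m) + 2) * (real (2*m)+1) * (fact (2*m) :: real)"
    by (simp add: algebra_simps)
  have f2: "fact (Suc m) = (real m + 1) * (fact m :: real)" by (simp add: algebra_simps)
  have p: "real m + 1 \<noteq> 0" by simp
  have "Gamma (real (Suc m) + 1/2) = Gamma ((real m + 1/2) + 1)" by (simp add: algebra_simps)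
  also have "\<dots> = (real m + 1/2) * Gamma (real m + 1/2)" using Gamma_plus1[OF nz] .
  also have "\<dots> = (real m + 1/2) * (fact (2*m) * sqrt pi / (4^m * fact m))"
    by (simp only: Suc)
  also have "\<dots> = fact (2*Suc m) * sqrt pi / (4^Suc m * fact (Suc m))"
    unfolding e1 f1 f2 using p by (simp add: divide_simps) (simp add: algebra_simps)
  finally show ?case .
qed

lemma F_deriv:
  fixes n :: nat and c :: real
  defines "F \<equiv> \<lambda>x::real. exp (-(x^2)) * ((hermite (Suc n) x)^2 - hermite n x * hermite (Suc (Suc n)) x
     + c * (hermite (Suc n) x)^2)"
  assumes c: "c = 1 / (2*real n + 2)"
  shows "(F has_real_derivative (- x * exp (-(x^2)) * (hermite (Suc n) x)^2 / (real n + 1))) (at x)"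
proof -
  have n1: "real n + 1 \<noteq> 0" "2*real n + 2 \<noteq> 0" by linarith+
  show ?thesis
  unfolding F_def
  apply (rule DERIV_cong)
   apply (rule derivative_eq_intros refl hermite_deriv)+
  apply (simp only: hermite.simps c)
  using n1 apply (simp add: divide_simps)
  apply (simp add: algebra_simps power2_eq_square)
  done
qed

lemma F_le0:
  fixes n :: nat and c :: real and x :: real
  defines "F \<equiv> \<lambda>x::real. exp (-(x^2)) * ((hermite (Suc n) x)^2 - hermite n x * hermite (Suc (Suc n)) x
     + c * (hermite (Suc n) x)^2)"
  assumes c: "c = 1 / (2*real n + 2)"
  shows "F x \<le> F 0"
proof -
  define D where "D = (\<lambda>x::real. - x * exp (-(x^2)) * (hermite (Suc n) x)^2 / (real n + 1))"
  have der: "\<And>t. (F has_real_derivative D t) (at t)"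
    unfolding F_def D_def using F_deriv[OF c] by blast
  consider "x = 0" | "x > 0" | "x < 0" by linarith
  then show ?thesis
  proof cases
    case 1 then show ?thesis by simp
  next
    case 2
    from MVT2[OF 2 der] obtain z where z: "0 < z" "F x - F 0 = (x - 0) * D z" by blast
    have "D z \<le> 0" unfolding D_def using z(1)
      by (intro divide_nonpos_pos mult_nonpos_nonneg) auto
    then have "(x - 0) * D z \<le> 0" using 2 by (simp add: mult_nonneg_nonpos)
    then show ?thesis using z by linarith
  next
    case 3
    from MVT2[OF 3 der] obtain z where z: "z < 0" "F 0 - F x = (0 - x) * D z" by blast
    have "D z \<ge> 0" unfolding D_def using z(1)
      by (intro divide_nonneg_pos mult_nonneg_nonneg) auto
    then have "(0 - x) * D z \<ge> 0" using 3 by (simp add: mult_nonpos_nonneg)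
    then show ?thesis using z by linarith
  qed
qed

lemma odd_alg:
  fixes A F q N s p :: real
  assumes "q>0" "F\<noteq>0" "p>0" "s^2=1" "N\<ge>0"
  shows "(s*A/F)^2 - 0 * X + 1/(2*N+2)*(s*A/F)^2 = q^2/(2*p)*((2*N+3)/(N+1))*(A * sqrt p/(q*F))^2"
proof -
  define D where "D = N + 1"
  have D: "D > 0" "2*N+2 = 2*D" "2*N+3 = 2*D+1" "N+1 = D" using assms(5) unfolding D_def by auto
  define K where "K = A^2/F^2"
  have "(A * sqrt p/(q*F))^2 = K*p/q^2" using assms unfolding K_def by (simp add: power_divide power_mult_distrib)
  moreover have "(s*A/F)^2 = K" using assms unfolding K_def by (simp add: power_divide power_mult_distrib)
  moreover have "K + 1/(2*D)*K = q^2/(2*p)*((2*D+1)/D)*(K*p/q^2)"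
    using assms D by (simp add: field_simps)
  ultimately show ?thesis unfolding D by simp
qed

lemma even_alg:
  fixes A F q M s p :: real
  assumes "q>0" "F\<noteq>0" "p>0" "s^2=1" "M\<ge>0"
  shows "0^2 - (s*A/F)*((-s)*((2*M+2)*(2*M+1)*A)/((M+1)*F)) + 1/(2*(2*M)+2) * 0^2
     = 4*q^2/(2*p)*(2*M+1)*(A * sqrt p/(q*F))^2"
proof -
  define D where "D = M + 1"
  have D: "D > 0" "2*M+2 = 2*D" "M+1 = D" using assms(5) unfolding D_def by auto
  have ss: "s * s = 1" using assms by (simp add: power2_eq_square)
  have "0^2 - (s*A/F)*((-s)*((2*M+2)*(2*M+1)*A)/((M+1)*F)) + 1/(2*(2*M)+2) * 0^2
      = - ((s*A/F)*((-s)*((2*D)*(2*M+1)*A)/(D*F)))" unfolding D by simp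
  also have "\<dots> = (s * s) * (2*(2*M+1)) * (A^2/F^2)"
    using assms(2) D(1) by (simp add: field_simps power2_eq_square)
  also have "\<dots> = (2*(2*M+1)) * (A^2/F^2)" unfolding ss by simp
  also have "\<dots> = 4*q^2/(2*p)*(2*M+1)*(A^2*p/(q^2*F^2))"
    using assms by (simp add: field_simps)
  also have "A^2*p/(q^2*F^2) = (A * sqrt p/(q*F))^2"
    using assms by (simp add: power_divide power_mult_distrib)
  finally show ?thesis .
qed

lemma F0_eq:
  fixes n :: nat
  shows "(hermite (Suc n) 0)^2 - hermite n 0 * hermite (Suc (Suc n)) 0
     + 1 / (2*real n + 2) * (hermite (Suc n) 0)^2 =
      (if odd n
             then 4 ^ (n + 1) / (2 * pi) * ((2 * real n + 3) / (real n + 1)) * (Gamma (real n / 2 + 1))^2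
             else 4 ^ (n + 1) / (2 * pi) * (real n + 1) * (Gamma ((real n + 1) / 2))^2)"
proof (cases "odd n")
  case True
  then obtain m where n: "n = Suc (2*m)" by (metis oddE Suc_eq_plus1)
  have h0: "hermite n 0 = 0" using hermite_zero[of m] n by simp
  have e1: "Suc n = 2 * Suc m" using n by simp
  have h1: "hermite (Suc n) 0 = (-1)^Suc m * fact (2*Suc m) / fact (Suc m)"
    unfolding e1 using hermite_zero[of "Suc m"] by simp
  have g: "real n / 2 + 1 = real (Suc m) + 1/2" using n by (simp add: field_simps)
  have p: "(4::real) ^ (n+1) = (4 ^ Suc m)^2" using n by (simp add: power_mult[symmetric] algebra_simps)
  have "((-1::real)^Suc m)^2 = 1" by (simp add: power_mult[symmetric] mult.commute[of _ 2] power_mult)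
  from odd_alg[OF _ _ pi_gt_zero this, of "4 ^ Suc m" "fact (Suc m)" "real n" "fact (2*Suc m)" "hermite (Suc (Suc n)) 0"]
  show ?thesis
    using True unfolding h0 h1 g p Gamma_half_nat by simp
next
  case False
  then obtain m where n: "n = 2*m" by (metis evenE)
  have h1: "hermite (Suc n) 0 = 0" using hermite_zero[of m] n by simp
  have e0: "hermite n 0 = (-1)^m * fact (2*m) / fact m" using hermite_zero[of m] n by simp
  have e1: "Suc (Suc n) = 2 * Suc m" using n by simp
  have f1: "fact (2 * Suc m) = (2*real m + 2) * (2*real m+1) * (fact (2*m) :: real)"
    by (simp add: e1[unfolded n] algebra_simps)
  have f2: "fact (Suc m) = (real m + 1) * (fact m :: real)" by (simp add: algebra_simps)
  have h2: "hermite (Suc (Suc n)) 0 = (-((-1)^m)) * ((2*real m + 2) * (2*real m+1) * fact (2*m)) / ((real m + 1) * fact m)"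
  proof -
    have hz: "hermite (2*Suc m) 0 = (-1)^Suc m * fact (2*Suc m)/fact(Suc m)"
      using hermite_zero[of "Suc m"] by blast
    show ?thesis unfolding e1 hz f1 f2 by simp
  qed
  have g: "(real n + 1) / 2 = real m + 1/2" using n by (simp add: field_simps)
  have p: "(4::real) ^ (n+1) = 4 * (4 ^ m)^2" using n by (simp add: power_mult[symmetric] algebra_simps)
  have "((-1::real)^m)^2 = 1" by (simp add: power_mult[symmetric] mult.commute[of _ 2] power_mult)
  from even_alg[OF _ _ pi_gt_zero this, of "4 ^ m" "fact m" "real m" "fact (2*m)"]
  show ?thesis
    using False unfolding h1 h2 e0 g p Gamma_half_nat by (simp add: n)
qed

theorem lemma3p2:
  fixes n :: nat
  shows "(\<forall>x::real. turan_h n x > 0) \<and>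
         (\<forall>x::real. turan_h n x \<le>
            (if odd n
             then 4 ^ (n + 1) / (2 * pi) * ((2 * real n + 3) / (real n + 1)) * (Gamma (real n / 2 + 1))^2
             else 4 ^ (n + 1) / (2 * pi) * (real n + 1) * (Gamma ((real n + 1) / 2))^2))"
proof (intro conjI allI)
  fix x :: real
  show "turan_h n x > 0" unfolding turan_h_def using delta_pos[of n x] by simp
next
  fix x :: real
  define c where "c = 1 / (2*real n + 2)"
  define F where "F = (\<lambda>x::real. exp (-(x^2)) * ((hermite (Suc n) x)^2 - hermite n x * hermite (Suc (Suc n)) x
     + c * (hermite (Suc n) x)^2))"
  have c0: "c \<ge> 0" unfolding c_def by simp
  have "turan_h n x \<le> F x" unfolding turan_h_def F_def
    using c0 by (simp add: distrib_left)
  also have "F x \<le> F 0" unfolding F_def by (rule F_le0) (simp add: c_def)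
  also have "F 0 = (hermite (Suc n) 0)^2 - hermite n 0 * hermite (Suc (Suc n)) 0
     + 1 / (2*real n + 2) * (hermite (Suc n) 0)^2" unfolding F_def c_def by simp
  also note F0_eq
  finally show "turan_h n x \<le> (if odd n
             then 4 ^ (n + 1) / (2 * pi) * ((2 * real n + 3) / (real n + 1)) * (Gamma (real n / 2 + 1))^2
             else 4 ^ (n + 1) / (2 * pi) * (real n + 1) * (Gamma ((real n + 1) / 2))^2)" .
qed

end
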